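(* For all integers $k$ and $D$ with $D\ge k\ge 2$, there exists a $k$-degenerate graph $H_{D,k}$ with maximum degree $D$ such that $H_{D,k}^2$ is not $\big((2k-1)D-k^2-1\big)$-degenerate; in fact $H_{D,k}^2$ contains an induced subgraph of minimum degree $(2k-1)D-k^2$.
   Context: A graph is $k$-degenerate if every subgraph has a vertex of degree at most $k$. The square $H^2$ is obtained from $H$ by adding an edge between every pair of vertices at distance 2 in $H$. *)

theory Defs
  imports Main
begin

definition simple_graph :: "'a set \<Rightarrow> ('a \<Rightarrow> 'a \<Rightarrow> bool) \<Rightarrow> bool" where
  "simple_graph V E \<longleftrightarrow> finite V \<and> (\<forall>x y. E x y \<longrightarrow> E y x) \<and> (\<forall>x. \<not> E x x)
     \<and> (\<forall>x y. E x y \<longrightarrow> x \<in> V \<and> y \<in> V)"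

definition deg :: "'a set \<Rightarrow> ('a \<Rightarrow> 'a \<Rightarrow> bool) \<Rightarrow> 'a \<Rightarrow> nat" where
  "deg W E v = card {u \<in> W. E v u}"

definition subgraph :: "'a set \<Rightarrow> ('a \<Rightarrow> 'a \<Rightarrow> bool) \<Rightarrow> 'a set \<Rightarrow> ('a \<Rightarrow> 'a \<Rightarrow> bool) \<Rightarrow> bool" where
  "subgraph W F V E \<longleftrightarrow> W \<subseteq> V \<and> (\<forall>x y. F x y \<longrightarrow> E x y \<and> x \<in> W \<and> y \<in> W)
     \<and> (\<forall>x y. F x y \<longrightarrow> F y x)"

definition degenerate :: "nat \<Rightarrow> 'a set \<Rightarrow> ('a \<Rightarrow> 'a \<Rightarrow> bool) \<Rightarrow> bool" where
  "degenerate k V E \<longleftrightarrow>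
     (\<forall>W F. subgraph W F V E \<and> W \<noteq> {} \<longrightarrow> (\<exists>v\<in>W. deg W F v \<le> k))"

definition max_degree_eq :: "'a set \<Rightarrow> ('a \<Rightarrow> 'a \<Rightarrow> bool) \<Rightarrow> nat \<Rightarrow> bool" where
  "max_degree_eq V E D \<longleftrightarrow> (\<forall>v\<in>V. deg V E v \<le> D) \<and> (\<exists>v\<in>V. deg V E v = D)"

definition min_degree_eq :: "'a set \<Rightarrow> ('a \<Rightarrow> 'a \<Rightarrow> bool) \<Rightarrow> nat \<Rightarrow> bool" where
  "min_degree_eq V E d \<longleftrightarrow> (\<forall>v\<in>V. d \<le> deg V E v) \<and> (\<exists>v\<in>V. deg V E v = d)"

definition graph_square :: "('a \<Rightarrow> 'a \<Rightarrow> bool) \<Rightarrow> 'a \<Rightarrow> 'a \<Rightarrow> bool" where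
  "graph_square E x y \<longleftrightarrow> x \<noteq> y \<and> (E x y \<or> (\<exists>z. E x z \<and> E z y))"

end

theory Submission imports Defs "HOL-Library.Countable" begin

definition bnd :: "nat \<Rightarrow> nat \<Rightarrow> nat \<Rightarrow> nat" where
  "bnd k D i = (if i < k then D else k)"

definition Pts :: "nat \<Rightarrow> nat \<Rightarrow> nat list set" where
  "Pts k D = {xs. length xs = D \<and> (\<forall>i<D. xs!i < bnd k D i)}"

fun Ed :: "nat \<Rightarrow> nat \<Rightarrow> (nat list + nat \<times> nat list) \<Rightarrow> (nat list + nat \<times> nat list) \<Rightarrow> bool" where
  "Ed k D (Inl x) (Inr (i,y)) = (x \<in> Pts k D \<and> i < D \<and> y = x[i:=0])"
| "Ed k D (Inr (i,y)) (Inl x) = (x \<in> Pts k D \<and> i < D \<and> y = x[i:=0])"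
| "Ed k D _ _ = False"

definition Vs :: "nat \<Rightarrow> nat \<Rightarrow> (nat list + nat \<times> nat list) set" where
  "Vs k D = Inl ` Pts k D \<union> Inr ` {(i, x[i:=0]) | i x. i < D \<and> x \<in> Pts k D}"

lemma finite_Pts: "k \<le> D \<Longrightarrow> finite (Pts k D)"
proof -
  assume "k \<le> D"
  have "Pts k D \<subseteq> {xs. set xs \<subseteq> {..<D} \<and> length xs = D}"
    using \<open>k \<le> D\<close> by (auto simp: Pts_def bnd_def in_set_conv_nth split: if_splits)
      (metis order_less_le_trans)
  moreover have "finite {xs. set xs \<subseteq> {..<D} \<and> length xs = D}"
    by (rule finite_lists_length_eq) simp
  ultimately show ?thesis by (rule finite_subset)
qed

lemma Ed_sym: "Ed k D x y \<Longrightarrow> Ed k D y x"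
  by (induct k D x y rule: Ed.induct) auto

lemma Ed_V: "Ed k D x y \<Longrightarrow> x \<in> Vs k D \<and> y \<in> Vs k D"
  by (induct k D x y rule: Ed.induct) (auto simp: Vs_def)

lemma upd_eq:
  assumes a: "length u = length w" "i < length w" "u[i:=0] = w[i:=0]"
  shows "u = w[i := u!i]"
proof (rule nth_equalityI)
  show "length u = length (w[i := u!i])" using a by simp
  fix j assume j: "j < length u"
  show "u!j = w[i := u!i] ! j"
  proof (cases "j = i")
    case True then show ?thesis using a j by simp
  next
    case False
    have "u!j = u[i:=0]!j" using False by simp
    also have "\<dots> = w[i:=0]!j" using a by simp
    also have "\<dots> = w!j" using False by simp
    finally show ?thesis using False by simp
  qed
qed

lemma nbr_pt: "x \<in> Pts k D \<Longrightarrow> {u \<in> Vs k D. Ed k D (Inl x) u} = Inr ` ((\<lambda>i. (i, x[i:=0])) ` {..<D})"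
  by (auto simp: Vs_def)

lemma deg_pt: "x \<in> Pts k D \<Longrightarrow> deg (Vs k D) (Ed k D) (Inl x) = D"
proof -
  assume x: "x \<in> Pts k D"
  have "inj_on (\<lambda>i. (i, x[i:=0])) {..<D}" by (auto simp: inj_on_def)
  then show ?thesis unfolding deg_def nbr_pt[OF x]
    by (simp add: card_image inj_on_def)
qed

lemma nbr_line: "{u \<in> A. Ed k D (Inr (i,y)) u} \<subseteq> Inl ` ((\<lambda>a. y[i:=a]) ` {..<bnd k D i})"
proof
  fix u assume "u \<in> {u \<in> A. Ed k D (Inr (i,y)) u}"
  then obtain x where u: "u = Inl x" "x \<in> Pts k D" "i < D" "y = x[i:=0]"
    by (cases u) auto
  then have xeq: "x = y[i := x!i]" using upd_eq[of x x i] by (auto simp: Pts_def)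
  moreover have xlt: "x!i < bnd k D i" using u by (auto simp: Pts_def)
  have "x \<in> (\<lambda>a. y[i:=a]) ` {..<bnd k D i}"
    using xeq xlt by (metis (no_types) image_eqI lessThan_iff)
  then show "u \<in> Inl ` ((\<lambda>a. y[i:=a]) ` {..<bnd k D i})" using u(1) by blast
qed

lemma deg_line_le: "finite A \<Longrightarrow> card {u \<in> A. Ed k D (Inr (i,y)) u} \<le> bnd k D i"
proof -
  assume "finite A"
  have "card {u \<in> A. Ed k D (Inr (i,y)) u} \<le> card (Inl ` ((\<lambda>a. y[i:=a]) ` {..<bnd k D i}) :: (nat list + nat \<times> nat list) set)"
    using nbr_line[of A k D i y] by (meson card_mono finite_imageI finite_lessThan)
  also have "\<dots> \<le> card {..<bnd k D i}" 
    by (metis card_image_le finite_imageI finite_lessThan le_trans)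
  finally show ?thesis by simp
qed

lemma finite_Vs: "k \<le> D \<Longrightarrow> finite (Vs k D)"
proof -
  assume kD: "k \<le> D"
  have "{(i, x[i:=0]) | i x. i < D \<and> x \<in> Pts k D} = (\<lambda>(i,x). (i, x[i:=0])) ` ({..<D} \<times> Pts k D)"
    by auto
  then show ?thesis using finite_Pts[OF kD] unfolding Vs_def by simp
qed

lemma sq_nbr:
  assumes w: "w \<in> Pts k D"
  shows "{u \<in> Inl ` Pts k D. graph_square (Ed k D) (Inl w) u}
       = Inl ` (\<Union>i\<in>{..<D}. (\<lambda>a. w[i:=a]) ` ({..<bnd k D i} - {w!i}))"
proof (intro equalityI subsetI)
  fix u :: "nat list + nat \<times> nat list" assume "u \<in> {u \<in> Inl ` Pts k D. graph_square (Ed k D) (Inl w) u}"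
  then obtain v where u: "u = Inl v" "v \<in> Pts k D" "graph_square (Ed k D) (Inl w) (Inl v)" by auto
  then obtain z where z: "Ed k D (Inl w) z" "Ed k D z (Inl v)" and ne: "v \<noteq> w"
    by (auto simp: graph_square_def)
  then obtain i where i: "z = Inr (i, w[i:=0])" "i < D" by (cases z) auto
  with z have vi: "v[i:=0] = w[i:=0]" by simp
  have lens: "length v = D" "length w = D" using u w by (auto simp: Pts_def)
  then have veq: "v = w[i := v!i]" using upd_eq[of v w i] vi i by simp
  have "v!i < bnd k D i" using u i by (auto simp: Pts_def)
  moreover have "v!i \<noteq> w!i" using veq ne by (metis list_update_id)
  ultimately have "v \<in> (\<lambda>a. w[i:=a]) ` ({..<bnd k D i} - {w!i})"
    using veq by (metis (no_types) image_eqI lessThan_iff Diff_iff singletonD)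
  then show "u \<in> Inl ` (\<Union>i\<in>{..<D}. (\<lambda>a. w[i:=a]) ` ({..<bnd k D i} - {w!i}))"
    using u(1) i(2) by blast
next
  fix u :: "nat list + nat \<times> nat list" assume "u \<in> Inl ` (\<Union>i\<in>{..<D}. (\<lambda>a. w[i:=a]) ` ({..<bnd k D i} - {w!i}))"
  then obtain i a where ia: "u = Inl (w[i:=a])" "i < D" "a < bnd k D i" "a \<noteq> w!i" by auto
  have lw: "length w = D" using w by (auto simp: Pts_def)
  have vP: "w[i:=a] \<in> Pts k D" using w ia lw by (auto simp: Pts_def nth_list_update)
  have ne: "w[i:=a] \<noteq> w" using ia lw by (metis nth_list_update_eq)
  have z1: "Ed k D (Inl w) (Inr (i, w[i:=0]))" using w ia by simp
  have z2: "Ed k D (Inr (i, w[i:=0])) u" using vP ia by simp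
  have z3: "Inl w \<noteq> u" using ia(1) ne by simp
  have "graph_square (Ed k D) (Inl w) u" unfolding graph_square_def using z1 z2 z3 by blast
  then show "u \<in> {u \<in> Inl ` Pts k D. graph_square (Ed k D) (Inl w) u}" using ia vP by auto
qed

lemma sum_bnd: "k \<le> D \<Longrightarrow> (\<Sum>i<D. bnd k D i - 1) = k*(D-1) + (D-k)*(k-1)"
proof -
  assume kD: "k \<le> D"
  have "(\<Sum>i<D. bnd k D i - 1) = (\<Sum>i\<in>{0..<k}. bnd k D i - 1) + (\<Sum>i\<in>{k..<D}. bnd k D i - 1)"
    using kD by (simp add: sum.atLeastLessThan_concat lessThan_atLeast0)
  also have "(\<Sum>i\<in>{0..<k}. bnd k D i - 1) = (\<Sum>i\<in>{0..<k}. D - 1)"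
    by (rule sum.cong) (auto simp: bnd_def)
  also have "(\<Sum>i\<in>{k..<D}. bnd k D i - 1) = (\<Sum>i\<in>{k..<D}. k - 1)"
    by (rule sum.cong) (auto simp: bnd_def)
  finally show ?thesis by simp
qed

lemma arith_id: "2 \<le> k \<Longrightarrow> k \<le> D \<Longrightarrow> k*(D-1) + (D-k)*(k-1) = (2*k-1)*D - (k::nat)^2"
proof -
  assume a: "2 \<le> k" "k \<le> D"
  define j where "j = k - 1"
  define t where "t = D - k"
  have jt: "k = j + 1" "D = j + 1 + t" using a by (simp_all add: j_def t_def)
  have "(2*k-1)*D = k*(D-1) + (D-k)*(k-1) + k^2"
    unfolding jt by (simp add: algebra_simps power2_eq_square)
  then show ?thesis by simp
qed

lemma deg_sq:
  assumes w: "w \<in> Pts k D" and k: "2 \<le> k" "k \<le> D"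
  shows "deg (Inl ` Pts k D) (graph_square (Ed k D)) (Inl w) = (2*k-1)*D - k^2"
proof -
  have lw: "length w = D" using w by (auto simp: Pts_def)
  have "deg (Inl ` Pts k D) (graph_square (Ed k D)) (Inl w)
      = card (\<Union>i\<in>{..<D}. (\<lambda>a. w[i:=a]) ` ({..<bnd k D i} - {w!i}))"
    unfolding deg_def sq_nbr[OF w] by (simp add: card_image)
  also have "\<dots> = (\<Sum>i<D. card ((\<lambda>a. w[i:=a]) ` ({..<bnd k D i} - {w!i})))"
  proof (rule card_UN_disjoint)
    show "\<forall>i\<in>{..<D}. \<forall>j\<in>{..<D}. i \<noteq> j \<longrightarrow>
      (\<lambda>a. w[i:=a]) ` ({..<bnd k D i} - {w!i}) \<inter> (\<lambda>a. w[j:=a]) ` ({..<bnd k D j} - {w!j}) = {}"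
    proof (intro ballI impI)
      fix i j assume "i \<in> {..<D}" "j \<in> {..<D}" "i \<noteq> j"
      then show "(\<lambda>a. w[i:=a]) ` ({..<bnd k D i} - {w!i}) \<inter> (\<lambda>a. w[j:=a]) ` ({..<bnd k D j} - {w!j}) = {}"
        using lw by (auto, metis nth_list_update_eq nth_list_update_neq)
    qed
  qed auto
  also have "\<dots> = (\<Sum>i<D. bnd k D i - 1)"
  proof (rule sum.cong)
    fix i assume i: "i \<in> {..<D}"
    have "inj_on (\<lambda>a. w[i:=a]) ({..<bnd k D i} - {w!i})"
      using i lw by (auto simp: inj_on_def) (metis nth_list_update_eq)
    moreover have "w!i < bnd k D i" using w i by (auto simp: Pts_def)
    ultimately show "card ((\<lambda>a. w[i:=a]) ` ({..<bnd k D i} - {w!i})) = bnd k D i - 1"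
      by (simp add: card_image)
  qed simp
  also have "\<dots> = (2*k-1)*D - k^2" using sum_bnd[OF k(2)] arith_id[OF k] by simp
  finally show ?thesis .
qed

lemma deg_sub_le:
  assumes "finite W" "\<And>u. F v u \<Longrightarrow> G v u"
  shows "deg W F v \<le> card {u \<in> W. G v u}"
  unfolding deg_def using assms by (intro card_mono) auto

lemma degen_H:
  assumes kD: "k \<le> D"
  shows "degenerate k (Vs k D) (Ed k D)"
  unfolding degenerate_def
proof (intro allI impI)
  fix W F assume a: "subgraph W F (Vs k D) (Ed k D) \<and> W \<noteq> {}"
  then have WV: "W \<subseteq> Vs k D" and FE: "\<And>x y. F x y \<Longrightarrow> Ed k D x y \<and> x \<in> W \<and> y \<in> W"
    and ne: "W \<noteq> {}" by (auto simp: subgraph_def)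
  have fW: "finite W" using finite_subset[OF WV finite_Vs[OF kD]] .
  show "\<exists>v\<in>W. deg W F v \<le> k"
  proof (cases "\<exists>i y. Inr (i,y) \<in> W \<and> k \<le> i")
    case True
    then obtain i y where iy: "Inr (i,y) \<in> W" "k \<le> i" by auto
    have "deg W F (Inr (i,y)) \<le> card {u \<in> W. Ed k D (Inr (i,y)) u}"
      using FE by (intro deg_sub_le[OF fW]) auto
    also have "\<dots> \<le> bnd k D i" by (rule deg_line_le[OF fW])
    also have "\<dots> = k" using iy by (simp add: bnd_def)
    finally show ?thesis using iy by blast
  next
    case False
    note F = this
    show ?thesis
    proof (cases "\<exists>x. Inl x \<in> W")
      case True
      then obtain x where x: "Inl x \<in> W" by auto
      have "deg W F (Inl x) \<le> card (Inr ` ((\<lambda>i. (i, x[i:=0])) ` {..<k}) :: (nat list + nat \<times> nat list) set)"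
        unfolding deg_def
      proof (rule card_mono)
        show "{u \<in> W. F (Inl x) u} \<subseteq> Inr ` ((\<lambda>i. (i, x[i:=0])) ` {..<k})"
        proof
          fix u assume "u \<in> {u \<in> W. F (Inl x) u}"
          then have u: "u \<in> W" "Ed k D (Inl x) u" using FE by auto
          then obtain i where i: "u = Inr (i, x[i:=0])" by (cases u) auto
          then have "i < k" using F u(1) by (meson not_le)
          then show "u \<in> Inr ` ((\<lambda>i. (i, x[i:=0])) ` {..<k})" using i by blast
        qed
      qed simp
      also have "\<dots> \<le> k"
        by (metis card_image_le card_lessThan finite_imageI finite_lessThan le_trans)
      finally show ?thesis using x by blast
    next
      case False
      obtain v where v: "v \<in> W" using ne by auto
      have "{u \<in> W. F v u} = {}"
      proof (rule ccontr)
        assume "{u \<in> W. F v u} \<noteq> {}"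
        then obtain u where "u \<in> W" "F v u" by auto
        then have "Ed k D v u" using FE by auto
        moreover obtain p where "v = Inr p" using False v by (cases v) auto
        moreover obtain q where "u = Inr q" using False \<open>u \<in> W\<close> by (cases u) auto
        ultimately show False by (cases p; cases q) auto
      qed
      then have d0: "deg W F v = 0" by (metis card.empty deg_def)
      show ?thesis using v d0 by (intro bexI[where x=v]) simp_all
    qed
  qed
qed

lemma construction:
  assumes k: "2 \<le> k" "k \<le> D"
  shows "\<exists>(V :: (nat list + nat \<times> nat list) set) E.
           simple_graph V E \<and> degenerate k V E \<and> max_degree_eq V E D
         \<and> (\<exists>W. W \<subseteq> V \<and> W \<noteq> {} \<and>
               min_degree_eq W (graph_square E) ((2*k - 1) * D - k^2))"
proof (intro exI conjI)
  show "simple_graph (Vs k D) (Ed k D)"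
    unfolding simple_graph_def using finite_Vs[OF k(2)] Ed_sym Ed_V
    by (auto elim: Ed.elims)
  show "degenerate k (Vs k D) (Ed k D)" by (rule degen_H[OF k(2)])
  have z: "replicate D 0 \<in> Pts k D" using k by (auto simp: Pts_def bnd_def)
  show "max_degree_eq (Vs k D) (Ed k D) D"
    unfolding max_degree_eq_def
  proof (intro conjI ballI bexI)
    fix v assume v: "v \<in> Vs k D"
    show "deg (Vs k D) (Ed k D) v \<le> D"
    proof (cases v)
      case (Inl x)
      then show ?thesis using v deg_pt by (auto simp: Vs_def)
    next
      case (Inr p)
      then obtain i y where "v = Inr (i,y)" by (cases p) auto
      then show ?thesis unfolding deg_def using deg_line_le[OF finite_Vs[OF k(2)], of k D i y] k(2)
        by (auto simp: bnd_def split: if_splits)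
    qed
  next
    show "deg (Vs k D) (Ed k D) (Inl (replicate D 0)) = D" by (rule deg_pt[OF z])
    show "Inl (replicate D 0) \<in> Vs k D" using z by (simp add: Vs_def)
  qed
  show "Inl ` Pts k D \<subseteq> Vs k D" by (auto simp: Vs_def)
  show "Inl ` Pts k D \<noteq> {}" using z by auto
  show "min_degree_eq (Inl ` Pts k D) (graph_square (Ed k D)) ((2*k - 1) * D - k^2)"
    unfolding min_degree_eq_def using deg_sq[OF _ k] z by auto
qed

lemma deg_transfer:
  assumes "inj f" "\<And>a b. G' (f a) (f b) = G a b"
  shows "deg (f ` W) G' (f v) = deg W G v"
proof -
  have "{u \<in> f ` W. G' (f v) u} = f ` {u \<in> W. G v u}" using assms(2) by auto
  then show ?thesis unfolding deg_def
    by (simp add: card_image inj_on_subset[OF assms(1)])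
qed

lemma nondeg:
  assumes "W \<subseteq> V" "W \<noteq> {}" "\<forall>v\<in>W. d \<le> deg W G v" "1 \<le> d" "\<And>x y. G x y \<Longrightarrow> G y x"
  shows "\<not> degenerate (d - 1) V G"
proof
  assume dg: "degenerate (d - 1) V G"
  let ?F = "\<lambda>x y. G x y \<and> x \<in> W \<and> y \<in> W"
  have "subgraph W ?F V G" using assms by (auto simp: subgraph_def)
  then obtain v where v: "v \<in> W" "deg W ?F v \<le> d - 1" using dg assms(2) unfolding degenerate_def by blast
  have "deg W ?F v = deg W G v" unfolding deg_def using v(1) by (metis (lifting))
  then show False using v assms(3,4) by fastforce
qed

lemma sq_transfer:
  assumes "inj f"
  shows "graph_square (\<lambda>x y. \<exists>a b. x = f a \<and> y = f b \<and> E a b) (f a) (f b) = graph_square E a b"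
  using assms unfolding graph_square_def by (auto dest: injD) blast

theorem mainTheorem12:
  fixes k D :: nat
  assumes "2 \<le> k" and "k \<le> D"
  shows "\<exists>(V :: nat set) E.
           simple_graph V E \<and> degenerate k V E \<and> max_degree_eq V E D
         \<and> \<not> degenerate ((2*k - 1) * D - k^2 - 1) V (graph_square E)
         \<and> (\<exists>W. W \<subseteq> V \<and> W \<noteq> {} \<and>
               min_degree_eq W (graph_square E) ((2*k - 1) * D - k^2))"
proof -
  obtain V :: "(nat list + nat \<times> nat list) set" and E W where
    sg: "simple_graph V E" and dg: "degenerate k V E" and md: "max_degree_eq V E D"
    and W: "W \<subseteq> V" "W \<noteq> {}" "min_degree_eq W (graph_square E) ((2*k - 1) * D - k^2)"
    using construction[OF assms] by blast
  define f :: "(nat list + nat \<times> nat list) \<Rightarrow> nat" where "f = to_nat"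
  have inj: "inj f" unfolding f_def by simp
  define E' where "E' = (\<lambda>x y. \<exists>a b. x = f a \<and> y = f b \<and> E a b)"
  have E'f: "E' (f a) (f b) = E a b" for a b using inj unfolding E'_def by (auto dest: injD)
  have E'r: "E' x y \<Longrightarrow> x \<in> range f \<and> y \<in> range f" for x y unfolding E'_def by auto
  have sqf: "graph_square E' (f a) (f b) = graph_square E a b" for a b
    unfolding E'_def by (rule sq_transfer[OF inj])
  have sym: "E a b \<Longrightarrow> E b a" for a b using sg by (auto simp: simple_graph_def)
  let ?d = "(2*k - 1) * D - k^2"
  have d1: "1 \<le> ?d"
  proof -
    define j where "j = k - 2"
    have kj: "k = j + 2" using assms(1) by (simp add: j_def)
    have "k^2 < (2*k-1)*k" unfolding kj by (simp add: power2_eq_square algebra_simps)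
    also have "\<dots> \<le> (2*k-1)*D" using assms(2) by simp
    finally show ?thesis by simp
  qed
  have fin': "finite (f ` V)" using sg by (simp add: simple_graph_def)
  have sym': "E' x y \<Longrightarrow> E' y x" for x y unfolding E'_def using sym by blast
  have irr': "\<not> E' x x" for x
  proof
    assume "E' x x"
    then obtain a b where ab: "x = f a" "x = f b" "E a b" unfolding E'_def by blast
    then have "a = b" using inj by (metis injD)
    then show False using ab(3) sg by (simp add: simple_graph_def)
  qed
  have inV': "E' x y \<Longrightarrow> x \<in> f ` V \<and> y \<in> f ` V" for x y
    unfolding E'_def using sg by (auto simp: simple_graph_def)
  have sg': "simple_graph (f ` V) E'"
    unfolding simple_graph_def using fin' sym' irr' inV' by blast
  have dg': "degenerate k (f ` V) E'"
    unfolding degenerate_def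
  proof (intro allI impI)
    fix W' F' assume a: "subgraph W' F' (f ` V) E' \<and> W' \<noteq> {}"
    define W0 where "W0 = f -` W'"
    define F0 where "F0 = (\<lambda>a b. F' (f a) (f b))"
    have W'eq: "W' = f ` W0" using a unfolding W0_def subgraph_def by auto
    have s1: "W0 \<subseteq> V"
    proof
      fix x assume "x \<in> W0"
      then have "f x \<in> f ` V" using a unfolding W0_def subgraph_def by auto
      then show "x \<in> V" using inj_image_mem_iff[OF inj] by blast
    qed
    have s2: "E x y \<and> x \<in> W0 \<and> y \<in> W0" if xy: "F0 x y" for x y
    proof -
      have "E' (f x) (f y) \<and> f x \<in> W' \<and> f y \<in> W'" using a xy unfolding subgraph_def F0_def by blast
      then show ?thesis by (simp add: E'f W0_def)
    qed
    have s3: "F0 y x" if xy: "F0 x y" for x y using a xy unfolding subgraph_def F0_def by blast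
    have "subgraph W0 F0 V E" unfolding subgraph_def using s1 s2 s3 by blast
    moreover have "W0 \<noteq> {}" using a W'eq by auto
    ultimately obtain v where v: "v \<in> W0" "deg W0 F0 v \<le> k" using dg unfolding degenerate_def by blast
    have "deg W' F' (f v) = deg W0 F0 v" unfolding W'eq F0_def by (rule deg_transfer[OF inj]) simp
    then show "\<exists>v\<in>W'. deg W' F' v \<le> k" using v W'eq by (intro bexI[where x="f v"]) auto
  qed
  have dV: "deg (f ` V) E' (f v) = deg V E v" for v
    by (rule deg_transfer[where G'=E' and G=E, OF inj E'f])
  have dW: "deg (f ` W) (graph_square E') (f v) = deg W (graph_square E) v" for v
    by (rule deg_transfer[where G'="graph_square E'" and G="graph_square E", OF inj sqf])
  have md1: "\<forall>v\<in>V. deg V E v \<le> D" and md2: "\<exists>v\<in>V. deg V E v = D"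
    using md unfolding max_degree_eq_def by blast+
  have "\<forall>v\<in>f ` V. deg (f ` V) E' v \<le> D"
  proof
    fix v' assume "v' \<in> f ` V"
    then obtain v where v: "v \<in> V" "v' = f v" by blast
    have "deg V E v \<le> D" using md1 v(1) by blast
    then show "deg (f ` V) E' v' \<le> D" unfolding v(2) dV .
  qed
  moreover have "\<exists>v\<in>f ` V. deg (f ` V) E' v = D"
  proof -
    obtain v where "v \<in> V" and v2: "deg V E v = D" using md2 by blast
    have "deg (f ` V) E' (f v) = D" using v2 unfolding dV .
    then show ?thesis using \<open>v \<in> V\<close> by blast
  qed
  ultimately have md': "max_degree_eq (f ` V) E' D" unfolding max_degree_eq_def by blast
  have mw1: "\<forall>v\<in>W. ?d \<le> deg W (graph_square E) v" and mw2: "\<exists>v\<in>W. deg W (graph_square E) v = ?d"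
    using W(3) unfolding min_degree_eq_def by blast+
  have "\<forall>v\<in>f ` W. ?d \<le> deg (f ` W) (graph_square E') v"
  proof
    fix v' assume "v' \<in> f ` W"
    then obtain v where v: "v \<in> W" "v' = f v" by blast
    have "?d \<le> deg W (graph_square E) v" using mw1 v(1) by blast
    then show "?d \<le> deg (f ` W) (graph_square E') v'" unfolding v(2) dW .
  qed
  moreover have "\<exists>v\<in>f ` W. deg (f ` W) (graph_square E') v = ?d"
  proof -
    obtain v where "v \<in> W" and v2: "deg W (graph_square E) v = ?d" using mw2 by blast
    have "deg (f ` W) (graph_square E') (f v) = ?d" using v2 unfolding dW .
    then show ?thesis using \<open>v \<in> W\<close> by blast
  qed
  ultimately have mW': "min_degree_eq (f ` W) (graph_square E') ?d" unfolding min_degree_eq_def by blast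
  have "\<not> degenerate (?d - 1) (f ` V) (graph_square E')"
  proof (rule nondeg[OF _ _ _ d1])
    show "f ` W \<subseteq> f ` V" using W by auto
    show "f ` W \<noteq> {}" using W by auto
    show "\<forall>v\<in>f ` W. ?d \<le> deg (f ` W) (graph_square E') v" using mW' by (simp add: min_degree_eq_def)
    show "graph_square E' x y \<Longrightarrow> graph_square E' y x" for x y
      unfolding graph_square_def using sym' by blast
  qed
  note nd = this
  have "f ` W \<subseteq> f ` V" "f ` W \<noteq> {}" using W by auto
  then have ex: "\<exists>W'. W' \<subseteq> f ` V \<and> W' \<noteq> {} \<and> min_degree_eq W' (graph_square E') ?d"
    using mW' by blast
  show ?thesis
    by (intro exI[of _ "f ` V"] exI[of _ E'] conjI sg' dg' md' nd ex)
qed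

end
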